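(* Let $n = 2k+1$ be an odd integer and $m = k(2k+1)$. If an edge-coloring of a complete graph contains no rainbow $n$-cycle and no rainbow $m$-cycle, then it contains no rainbow $M$-cycle for every integer $M \ge 4k^3 - 2k^2 - 8k + 8 = n^3/2 - 2n^2 - 3n/2 + 11$.
   Context: A coloring is an arbitrary (not necessarily proper) assignment of colors, from an arbitrary set, to the edges of an undirected complete graph; the graph may be finite or infinite. A rainbow $n$-cycle is a cycle through $n$ distinct vertices whose $n$ edges all receive pairwise distinct colors. *)

theory Defs
  imports Main
begin

text \<open>An edge-coloring of the complete graph on vertex type 'a is any function
  c assigning a color to each edge; the edge between distinct vertices u, v is the
  unordered pair {u, v}, so c {u, v} is its color (values on other sets are irrelevant).\<close>

definition rainbow_cycle :: "('a set \<Rightarrow> 'b) \<Rightarrow> nat \<Rightarrow> bool" where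
  "rainbow_cycle c n \<longleftrightarrow> 3 \<le> n \<and>
     (\<exists>vs :: 'a list. length vs = n \<and> distinct vs \<and>
        inj_on (\<lambda>i. c {vs ! i, vs ! ((i + 1) mod n)}) {..<n})"

end

theory Submission
  imports Defs
begin

lemma chord:
  fixes c :: "'a set \<Rightarrow> 'b"
  assumes rc: "rainbow_cycle c L" and a3: "3 \<le> a" and aL: "a + 1 \<le> L"
  shows "rainbow_cycle c a \<or> rainbow_cycle c (L + 2 - a)"
proof -
  obtain vs :: "'a list" where len: "length vs = L" and dist: "distinct vs"
    and inj: "inj_on (\<lambda>i. c {vs ! i, vs ! ((i + 1) mod L)}) {..<L}"
    using rc unfolding rainbow_cycle_def by blast
  define e where "e = (\<lambda>i. c {vs ! i, vs ! ((i + 1) mod L)})"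
  have inj: "inj_on e {..<L}" using inj by (simp add: e_def)
  define \<chi> where "\<chi> = c {vs ! (a - 1), vs ! 0}"
  show ?thesis
  proof (cases "\<chi> \<in> e ` {..<a - 1}")
    case False
    define ws where "ws = take a vs"
    define f where "f = (\<lambda>i. c {ws ! i, ws ! ((i + 1) mod a)})"
    have lw: "length ws = a" using len aL by (simp add: ws_def)
    have dw: "distinct ws" using dist by (simp add: ws_def)
    have fe: "f i = e i" if "i < a - 1" for i
      using that aL by (simp add: f_def e_def ws_def)
    have fa: "f (a - 1) = \<chi>"
      using a3 by (simp add: f_def \<chi>_def ws_def)
    have s: "{..<a} = insert (a - 1) {..<a - 1}" using a3 by auto
    have i1: "inj_on f {..<a - 1}"
    proof -
      have "inj_on e {..<a - 1}" using inj aL by (auto intro: inj_on_subset)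
      then show ?thesis using fe by (simp add: inj_on_def)
    qed
    have im: "f ` {..<a - 1} = e ` {..<a - 1}" by (auto simp: fe)
    have "inj_on f {..<a}" unfolding s using i1 False im fa by auto
    then have "rainbow_cycle c a" unfolding rainbow_cycle_def
      using a3 lw dw unfolding f_def by blast
    then show ?thesis by blast
  next
    case True
    then obtain j where j: "j < a - 1" "\<chi> = e j" by blast
    define b where "b = L + 2 - a"
    define us where "us = drop (a - 1) vs @ [vs ! 0]"
    define f where "f = (\<lambda>i. c {us ! i, us ! ((i + 1) mod b)})"
    have lu: "length us = b" using len aL a3 by (simp add: us_def b_def)
    have "vs ! 0 \<in> set (take (a - 1) vs)" using a3 aL len
    proof -
      have "0 < length (take (a - 1) vs)" using a3 aL len by simp
      then have "take (a - 1) vs ! 0 \<in> set (take (a - 1) vs)" by (rule nth_mem)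
      moreover have "take (a - 1) vs ! 0 = vs ! 0" using a3 by simp
      ultimately show ?thesis by simp
    qed
    then have "vs ! 0 \<notin> set (drop (a - 1) vs)"
      using dist by (metis append_take_drop_id disjoint_iff distinct_append)
    then have du: "distinct us" using dist by (simp add: us_def)
    have fe: "f i = e (a - 1 + i)" if "i < b - 1" for i
    proof (cases "i + 1 < L + 1 - a")
      case True
      have "us ! i = vs ! (a - 1 + i)" using that len aL a3 by (simp add: us_def b_def nth_append)
      moreover have "us ! ((i + 1) mod b) = vs ! ((a - 1 + i + 1) mod L)"
        using that len aL a3 True by (simp add: us_def b_def nth_append)
      ultimately show ?thesis by (simp add: f_def e_def)
    next
      case False
      then have ii: "i = L - a" using that b_def by auto
      have "us ! i = vs ! (a - 1 + i)" using that len aL a3 by (simp add: us_def b_def nth_append)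
      moreover have "us ! ((i + 1) mod b) = vs ! ((a - 1 + i + 1) mod L)"
      proof -
        have "(i + 1) mod b = length (drop (a - 1) vs)" using ii len aL a3 b_def by simp
        then have "us ! ((i + 1) mod b) = vs ! 0" unfolding us_def by (metis nth_append_length)
        moreover have "(a - 1 + i + 1) mod L = 0" using ii aL a3 by simp
        ultimately show ?thesis by simp
      qed
      ultimately show ?thesis by (simp add: f_def e_def)
    qed
    have fb: "f (b - 1) = \<chi>"
    proof -
      have "us ! (b - 1) = vs ! 0" using len aL a3 by (simp add: us_def b_def nth_append)
      moreover have "us ! ((b - 1 + 1) mod b) = vs ! (a - 1)"
      proof -
        have "b - 1 + 1 = b" using aL b_def by simp
        then have "(b - 1 + 1) mod b = 0" by simp
        then show ?thesis using len aL a3 by (simp add: us_def nth_append)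
      qed
      ultimately show ?thesis by (simp add: f_def \<chi>_def insert_commute)
    qed
    have s: "{..<b} = insert (b - 1) {..<b - 1}" using aL b_def by auto
    have i1: "inj_on f {..<b - 1}"
    proof (rule inj_onI)
      fix x y assume x: "x \<in> {..<b - 1}" and y: "y \<in> {..<b - 1}" and "f x = f y"
      then have "e (a - 1 + x) = e (a - 1 + y)" by (simp add: fe)
      moreover have "a - 1 + x \<in> {..<L}" "a - 1 + y \<in> {..<L}" using x y b_def aL a3 by auto
      ultimately show "x = y" using inj by (meson add_left_imp_eq inj_onD)
    qed
    have nin: "\<chi> \<notin> f ` {..<b - 1}"
    proof
      assume "\<chi> \<in> f ` {..<b - 1}"
      then obtain x where x: "x < b - 1" "\<chi> = e (a - 1 + x)" by (auto simp: fe)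
      then have "e j = e (a - 1 + x)" using j by simp
      moreover have "a - 1 + x \<in> {..<L}" "j \<in> {..<L}" using x j b_def aL a3 by auto
      ultimately have "j = a - 1 + x" using inj by (meson inj_onD)
      then show False using j by simp
    qed
    have "inj_on f {..<b}" unfolding s using i1 nin fb by auto
    then have "rainbow_cycle c b" unfolding rainbow_cycle_def
      using lu du aL b_def unfolding f_def by auto
    then show ?thesis by (simp add: b_def)
  qed
qed

lemma step:
  assumes "\<not> rainbow_cycle c t" "3 \<le> t" "3 \<le> L" "\<not> rainbow_cycle c L"
  shows "\<not> rainbow_cycle c (L + (t - 2))"
proof
  assume "rainbow_cycle c (L + (t - 2))"
  from chord[OF this, of t] assms have "rainbow_cycle c t \<or> rainbow_cycle c (L + (t - 2) + 2 - t)"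
    by simp
  moreover have "L + (t - 2) + 2 - t = L" using assms by simp
  ultimately show False using assms by simp
qed

lemma iter:
  assumes "\<not> rainbow_cycle c t" "3 \<le> t" "3 \<le> L" "\<not> rainbow_cycle c L"
  shows "\<not> rainbow_cycle c (L + j * (t - 2))"
proof (induction j)
  case 0 then show ?case using assms by simp
next
  case (Suc j)
  have "\<not> rainbow_cycle c (L + j * (t - 2) + (t - 2))"
    by (rule step[OF assms(1,2) _ Suc]) (use assms in simp)
  moreover have "L + Suc j * (t - 2) = L + j * (t - 2) + (t - 2)" by simp
  ultimately show ?case by metis
qed

lemma frob:
  fixes p q N :: int
  assumes p: "p > 0" and q: "q \<ge> 0" and r: "q + 1 = p * r" and N: "N \<ge> (p - 1) * (q - 1)"
  shows "\<exists>a b :: nat. N = int a * p + int b * q"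
proof -
  define b where "b = (- N) mod p"
  have b0: "0 \<le> b" "b \<le> p - 1" using p by (auto simp: b_def)
  have "(N + b) mod p = 0" unfolding b_def by (simp only: mod_add_right_eq) simp
  then obtain s where s: "N + b = p * s" by auto
  have "N - b * q = (N + b) - b * (q + 1)" by (simp add: algebra_simps)
  also have "\<dots> = p * s - b * (p * r)" using s r by simp
  also have "\<dots> = p * (s - b * r)" by (simp add: algebra_simps)
  finally have e: "N - b * q = p * (s - b * r)" .
  have "b * q \<le> (p - 1) * q" using b0 q by (simp add: mult_right_mono)
  then have "N - b * q \<ge> (p - 1) * (q - 1) - (p - 1) * q" using N by simp
  also have "(p - 1) * (q - 1) - (p - 1) * q = - (p - 1)" by (simp add: algebra_simps)
  finally have "p * (s - b * r) > - p" using e by simp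
  then have "p * (s - b * r) > p * (-1)" by simp
  then have "s - b * r > -1" using p mult_less_cancel_left_pos by blast
  then have "s - b * r \<ge> 0" by simp
  then have "N = int (nat (s - b * r)) * p + int (nat b) * q" using e b0 by (simp add: algebra_simps)
  then show ?thesis by blast
qed

theorem lemma10:
  fixes c :: "'a set \<Rightarrow> 'b" and k M :: nat
  assumes "k \<ge> 1"
    and "\<not> rainbow_cycle c (2 * k + 1)"
    and "\<not> rainbow_cycle c (k * (2 * k + 1))"
    and "int M \<ge> 4 * int k ^ 3 - 2 * int k ^ 2 - 8 * int k + 8"
  shows "\<not> rainbow_cycle c M"
proof
  assume rc: "rainbow_cycle c M"
  then have M3: "M \<ge> 3" by (simp add: rainbow_cycle_def)
  define n where "n = 2 * k + 1"
  define m where "m = k * (2 * k + 1)"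
  have n3: "n \<ge> 3" using assms(1) by (simp add: n_def)
  have m3: "m \<ge> 3" using assms(1) unfolding m_def
    by (metis mult_le_mono le_refl mult_1 n3 n_def)
  have "\<exists>a b :: nat. int M - 2 = int a * (int n - 2) + int b * (int m - 2)"
  proof (rule frob)
    show "int n - 2 > 0" using n3 by simp
    show "int m - 2 \<ge> 0" using m3 by simp
    show "int m - 2 + 1 = (int n - 2) * (int k + 1)" by (simp add: m_def n_def algebra_simps)
    show "int M - 2 \<ge> (int n - 2 - 1) * (int m - 2 - 1)"
      using assms(4) by (simp add: m_def n_def algebra_simps power3_eq_cube power2_eq_square)
  qed
  then obtain a b :: nat where ab: "int M - 2 = int a * (int n - 2) + int b * (int m - 2)" by blast
  have "int (M - 2) = int (a * (n - 2) + b * (m - 2))" using ab M3 n3 m3 by (simp add: of_nat_diff)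
  then have ab': "M - 2 = a * (n - 2) + b * (m - 2)" by (simp only: of_nat_eq_iff)
  have nn: "\<not> rainbow_cycle c n" using assms(2) by (simp add: n_def)
  have nm: "\<not> rainbow_cycle c m" using assms(3) by (simp add: m_def)
  show False
  proof (cases a)
    case 0
    then obtain b' where b': "b = Suc b'" using ab' M3 by (cases b) auto
    have "M = m + b' * (m - 2)" using ab' 0 b' M3 m3 by (simp add: algebra_simps)
    then show False using iter[OF nm m3 m3 nm, of b'] rc by simp
  next
    case (Suc a')
    have "\<not> rainbow_cycle c (n + a' * (n - 2))" by (rule iter[OF nn n3 n3 nn])
    then have "\<not> rainbow_cycle c (n + a' * (n - 2) + b * (m - 2))"
      using iter[OF nm m3, of "n + a' * (n - 2)" b] n3 by simp
    moreover have "M - 2 = (n - 2) + a' * (n - 2) + b * (m - 2)" using ab' Suc by simp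
    then have "M = n + a' * (n - 2) + b * (m - 2)" using M3 n3 by linarith
    ultimately show False using rc by simp
  qed
qed

end
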